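(* Let $A(t)$ be a holomorphic $2\times2$ matrix function on $|t|\le1$ with $A(0)=\operatorname{diag}(1,-1)$. Let $$\dot z=\frac{A(t,\varepsilon)}{(t-\alpha_0(\varepsilon))(t-\alpha_1(\varepsilon))}\,z$$ be a generic deformation of $\dot z=t^{-2}A(t)z$ with $\operatorname{Im}\alpha_0(\varepsilon)>0$. Set $t_0=-\frac12$ and let $M_0,M_1$ be the monodromy operators of the perturbed equation on $H_{t_0}$, with eigenvalues $\lambda_{i1},\lambda_{i2}$ of $M_i$ numbered as in the context. Then, as $\varepsilon\to0$, $$\lambda_{01},\lambda_{12}\to\infty,\qquad \lambda_{02},\lambda_{11}\to 0,$$ $$\ln\lambda_{01}=-(1+o(1))\ln\lambda_{02}=-(1+o(1))\ln\lambda_{11}=(1+o(1))\ln\lambda_{12}.$$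
   Context: Deformation: $A(t,\varepsilon)$ is holomorphic in $t$ on $|t|\le1$ and continuous in $\varepsilon\ge0$, $A(t,0)=A(t)$; $\alpha_0,\alpha_1$ are continuous, $\alpha_0+\alpha_1\equiv0$, $\alpha_i(0)=0$, $\alpha_0(\varepsilon)\ne\alpha_1(\varepsilon)$ for $\varepsilon>0$. Generic: the line through $\alpha_0(\varepsilon),\alpha_1(\varepsilon)$ intersects the real axis at an angle bounded away from $0$ uniformly in $\varepsilon>0$. Monodromy: $H_{t_0}$ is the space of local solutions at $t_0$. For $i=0,1$, let $l_i$ be a small counterclockwise circle around $\alpha_i(\varepsilon)$ whose closed disc does not contain $\alpha_{1-i}(\varepsilon)$, and let $a_i=[t_0,\alpha_i]\cap l_i$. $M_i$ is the monodromy of the perturbed equation along $[t_0,a_i]\circ l_i\circ[t_0,a_i]^{-1}$. Numbering: let $\kappa_{i1}(\varepsilon),\kappa_{i2}(\varepsilon)$ be the eigenvalues of $A(\alpha_i(\varepsilon),\varepsilon)$, numbered so that $\kappa_{i1}\to1$ and $\kappa_{i2}\to-1$. The characteristic numbers of the Fuchsian point $\alpha_i$ are $\rho_{ij}=\kappa_{ij}/(\alpha_i-\alpha_{1-i})$. The eigenvalue of $M_i$ corresponding to $\rho_{ij}$ is $\lambda_{ij}=\exp(2\pi i\rho_{ij})$, and $\ln\lambda_{ij}$ denotes the determination $2\pi i\rho_{ij}$. *)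

theory Defs
  imports "HOL-Analysis.Analysis"
begin

definition eigenvalues2 :: "complex^2^2 \<Rightarrow> complex \<Rightarrow> complex \<Rightarrow> bool" where
  "eigenvalues2 M k1 k2 \<longleftrightarrow> (\<forall>x. det (mat x - M) = (x - k1) * (x - k2))"

definition char_number :: "complex \<Rightarrow> complex \<Rightarrow> complex \<Rightarrow> complex" where
  "char_number k ai aj = k / (ai - aj)"

definition mono_eig :: "complex \<Rightarrow> complex \<Rightarrow> complex \<Rightarrow> complex" where
  "mono_eig k ai aj = exp (2 * of_real pi * \<i> * char_number k ai aj)"

definition ln_mono_eig :: "complex \<Rightarrow> complex \<Rightarrow> complex \<Rightarrow> complex" where
  "ln_mono_eig k ai aj = 2 * of_real pi * \<i> * char_number k ai aj"

end

theory Submission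
  imports Defs
begin

lemma re_bound:
  fixes d k :: complex and c :: real
  assumes "d \<noteq> 0" "Im d \<ge> c * cmod d" "cmod (k - 1) \<le> c/2"
  shows "Re (\<i> * k / d) \<ge> (c/2) / cmod d"
proof -
  have e: "\<i> * k / d = \<i> / d + \<i> * (k - 1) / d" by (simp add: add_divide_distrib[symmetric] algebra_simps)
  have r1: "Re (\<i> / d) = Im d / (cmod d)^2"
  proof -
    have "(cmod d)^2 = (Re d)^2 + (Im d)^2" by (rule cmod_power2)
    then show ?thesis by (simp add: Re_divide)
  qed
  have p: "cmod d > 0" using assms by simp
  have "Im d / (cmod d)^2 \<ge> c * cmod d / (cmod d)^2"
    using assms(2) p by (simp add: divide_right_mono)
  also have "c * cmod d / (cmod d)^2 = c / cmod d" using p by (simp add: power2_eq_square)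
  finally have r1': "Re (\<i> / d) \<ge> c / cmod d" using r1 by simp
  have "\<bar>Re (\<i> * (k - 1) / d)\<bar> \<le> cmod (\<i> * (k - 1) / d)" by (rule abs_Re_le_cmod)
  also have "\<dots> = cmod (k - 1) / cmod d" by (simp add: norm_divide norm_mult)
  also have "\<dots> \<le> (c/2) / cmod d" using assms(3) p by (intro divide_right_mono) auto
  finally have "Re (\<i> * (k - 1) / d) \<ge> - ((c/2) / cmod d)" by linarith
  then show ?thesis using r1' e by (simp add: field_simps)
qed

lemma key:
  fixes d k :: "real \<Rightarrow> complex" and c :: real
  assumes c: "c > 0" and d0: "(d \<longlongrightarrow> 0) F" and gen: "eventually (\<lambda>x. Im (d x) \<ge> c * cmod (d x)) F"
    and nz: "eventually (\<lambda>x. d x \<noteq> 0) F" and k1: "(k \<longlongrightarrow> 1) F"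
  shows "filterlim (\<lambda>x. Re (2 * of_real pi * \<i> * k x / d x)) at_top F"
proof -
  have "((\<lambda>x. cmod (d x)) \<longlongrightarrow> 0) F" using d0 tendsto_norm_zero by blast
  then have inv: "filterlim (\<lambda>x. inverse (cmod (d x))) at_top F"
    by (rule filterlim_inverse_at_top) (use nz in \<open>auto elim: eventually_mono\<close>)
  have lim: "filterlim (\<lambda>x. (pi * c) * inverse (cmod (d x))) at_top F"
    by (rule filterlim_tendsto_pos_mult_at_top[OF tendsto_const _ inv]) (use c in simp)
  have "eventually (\<lambda>x. cmod (k x - 1) < c/2) F"
    using k1 c unfolding tendsto_iff dist_norm by (metis half_gt_zero)
  with gen nz have ev: "eventually (\<lambda>x. (pi * c) * inverse (cmod (d x)) \<le> Re (2 * of_real pi * \<i> * k x / d x)) F"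
  proof eventually_elim
    case (elim x)
    then have h: "Im (d x) \<ge> c * cmod (d x) \<and> d x \<noteq> 0" and kk: "cmod (k x - 1) < c/2" by auto
    have "Re (\<i> * k x / d x) \<ge> (c/2) / cmod (d x)" using re_bound[of "d x" c "k x"] h kk by simp
    moreover have "Re (2 * of_real pi * \<i> * k x / d x) = 2 * pi * Re (\<i> * k x / d x)"
    proof -
      have "2 * of_real pi * \<i> * k x / d x = of_real (2*pi) * (\<i> * k x / d x)" by simp
      then show ?thesis by (metis scaleR_complex.sel(1) scaleR_conv_of_real)
    qed
    ultimately show "(pi * c) * inverse (cmod (d x)) \<le> Re (2 * of_real pi * \<i> * k x / d x)"
    proof -
      assume a: "(c/2) / cmod (d x) \<le> Re (\<i> * k x / d x)" and b: "Re (2 * of_real pi * \<i> * k x / d x) = 2 * pi * Re (\<i> * k x / d x)"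
      have "(pi * c) * inverse (cmod (d x)) = (2*pi) * ((c/2) / cmod (d x))" by (simp add: field_simps)
      also have "\<dots> \<le> (2*pi) * Re (\<i> * k x / d x)" using a pi_gt_zero by (intro mult_left_mono) auto
      finally show ?thesis using b by simp
    qed
  qed
  show ?thesis by (rule filterlim_at_top_mono[OF lim ev])
qed

lemma L_inf: "filterlim (\<lambda>x. Re (f x)) at_top F \<Longrightarrow> filterlim (\<lambda>x. exp (f x :: complex)) at_infinity F"
  unfolding filterlim_at_infinity_conv_norm_at_top norm_exp_eq_Re
  by (rule filterlim_compose[OF exp_at_top])
lemma L_zero: "filterlim (\<lambda>x. Re (f x)) at_top F \<Longrightarrow> ((\<lambda>x. exp (- f x :: complex)) \<longlongrightarrow> 0) F"
proof -
  assume a: "filterlim (\<lambda>x. Re (f x)) at_top F"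
  have "filterlim (\<lambda>x. - Re (f x)) at_bot F" using a by (simp add: filterlim_uminus_at_bot)
  then have "((\<lambda>x. exp (- Re (f x))) \<longlongrightarrow> 0) F" by (rule filterlim_compose[OF exp_at_bot])
  then have "((\<lambda>x. norm (exp (- f x))) \<longlongrightarrow> 0) F" by (simp add: norm_exp_eq_Re)
  then show ?thesis by (rule tendsto_norm_zero_cancel)
qed
lemma ratio:
  fixes a b :: "real \<Rightarrow> complex"
  assumes "(a \<longlongrightarrow> 1) F" "(b \<longlongrightarrow> -1) F"
  shows "((\<lambda>x. - a x / b x - 1) \<longlongrightarrow> 0) F"
proof -
  have "((\<lambda>x. - a x / b x - 1) \<longlongrightarrow> - 1 / - 1 - 1) F"
    by (intro tendsto_intros assms) simp
  then show ?thesis by simp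
qed
lemma ratio2:
  fixes a b :: "real \<Rightarrow> complex"
  assumes "(a \<longlongrightarrow> 1) F" "(b \<longlongrightarrow> 1) F"
  shows "((\<lambda>x. a x / b x - 1) \<longlongrightarrow> 0) F"
proof -
  have "((\<lambda>x. a x / b x - 1) \<longlongrightarrow> 1 / 1 - 1) F"
    by (intro tendsto_intros assms) simp
  then show ?thesis by simp
qed



lemma swapdiv: fixes x a b :: complex shows "x/(b-a) = (-x)/(a-b)"
  by (metis divide_minus_left divide_minus_right minus_diff_eq)
lemma l6: fixes p k1 k2 a b :: complex assumes "k2 \<noteq> 0"
  shows "p * (k1 / (a - b)) = - (1 + (k1 / k2 - 1)) * (p * (k2 / (b - a)))"
proof -
  have "- (1 + (k1 / k2 - 1)) * (p * (k2 / (b - a))) = (k1/k2) * (p * (k2 / (a - b)))"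
    by (simp add: swapdiv[of _ a b])
  also have "\<dots> = p * (k1 / (a - b))" using assms by simp
  finally show ?thesis by simp
qed
lemma l7: fixes p k1 k2 a b :: complex assumes "k2 \<noteq> 0"
  shows "p * (k1 / (a - b)) = (1 + (- k1 / k2 - 1)) * (p * (k2 / (b - a)))"
proof -
  have "(1 + (- k1 / k2 - 1)) * (p * (k2 / (b - a))) = (k1/k2) * (p * (k2 / (a - b)))"
    by (simp add: swapdiv[of _ a b])
  also have "\<dots> = p * (k1 / (a - b))" using assms by simp
  finally show ?thesis by simp
qed
lemma l5: fixes p k1 k2 d :: complex assumes "k2 \<noteq> 0"
  shows "p * (k1 / d) = - (1 + (- k1 / k2 - 1)) * (p * (k2 / d))"
  using assms by simp

theorem proposition3p3:
  fixes A :: "complex \<Rightarrow> real \<Rightarrow> complex^2^2"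
    and \<alpha>0 \<alpha>1 :: "real \<Rightarrow> complex"
    and \<kappa>01 \<kappa>02 \<kappa>11 \<kappa>12 :: "real \<Rightarrow> complex"
  assumes holo: "\<And>\<epsilon> i j. \<epsilon> \<ge> 0 \<Longrightarrow> (\<lambda>t. A t \<epsilon> $ i $ j) holomorphic_on cball 0 1"
    and cont: "continuous_on (cball 0 1 \<times> {0..}) (\<lambda>(t, \<epsilon>). A t \<epsilon>)"
    and A00: "A 0 0 $ 1 $ 1 = 1" "A 0 0 $ 1 $ 2 = 0" "A 0 0 $ 2 $ 1 = 0" "A 0 0 $ 2 $ 2 = -1"
    and cont\<alpha>: "continuous_on {0..} \<alpha>0" "continuous_on {0..} \<alpha>1"
    and sum\<alpha>: "\<And>\<epsilon>. \<alpha>0 \<epsilon> + \<alpha>1 \<epsilon> = 0"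
    and \<alpha>zero: "\<alpha>0 0 = 0" "\<alpha>1 0 = 0"
    and \<alpha>ne: "\<And>\<epsilon>. \<epsilon> > 0 \<Longrightarrow> \<alpha>0 \<epsilon> \<noteq> \<alpha>1 \<epsilon>"
    and generic: "\<exists>c>0. \<forall>\<epsilon>>0. \<bar>Im (\<alpha>0 \<epsilon> - \<alpha>1 \<epsilon>)\<bar> \<ge> c * cmod (\<alpha>0 \<epsilon> - \<alpha>1 \<epsilon>)"
    and Im\<alpha>0: "\<And>\<epsilon>. \<epsilon> > 0 \<Longrightarrow> Im (\<alpha>0 \<epsilon>) > 0"
    and eig0: "\<And>\<epsilon>. \<epsilon> > 0 \<Longrightarrow> eigenvalues2 (A (\<alpha>0 \<epsilon>) \<epsilon>) (\<kappa>01 \<epsilon>) (\<kappa>02 \<epsilon>)"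
    and eig1: "\<And>\<epsilon>. \<epsilon> > 0 \<Longrightarrow> eigenvalues2 (A (\<alpha>1 \<epsilon>) \<epsilon>) (\<kappa>11 \<epsilon>) (\<kappa>12 \<epsilon>)"
    and num: "(\<kappa>01 \<longlongrightarrow> 1) (at_right 0)" "(\<kappa>02 \<longlongrightarrow> -1) (at_right 0)"
             "(\<kappa>11 \<longlongrightarrow> 1) (at_right 0)" "(\<kappa>12 \<longlongrightarrow> -1) (at_right 0)"
  shows "filterlim (\<lambda>\<epsilon>. mono_eig (\<kappa>01 \<epsilon>) (\<alpha>0 \<epsilon>) (\<alpha>1 \<epsilon>)) at_infinity (at_right 0)
       \<and> filterlim (\<lambda>\<epsilon>. mono_eig (\<kappa>12 \<epsilon>) (\<alpha>1 \<epsilon>) (\<alpha>0 \<epsilon>)) at_infinity (at_right 0)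
       \<and> ((\<lambda>\<epsilon>. mono_eig (\<kappa>02 \<epsilon>) (\<alpha>0 \<epsilon>) (\<alpha>1 \<epsilon>)) \<longlongrightarrow> 0) (at_right 0)
       \<and> ((\<lambda>\<epsilon>. mono_eig (\<kappa>11 \<epsilon>) (\<alpha>1 \<epsilon>) (\<alpha>0 \<epsilon>)) \<longlongrightarrow> 0) (at_right 0)
       \<and> (\<exists>h. (h \<longlongrightarrow> 0) (at_right 0) \<and> (\<forall>\<^sub>F \<epsilon> in at_right 0.
            ln_mono_eig (\<kappa>01 \<epsilon>) (\<alpha>0 \<epsilon>) (\<alpha>1 \<epsilon>)
              = - (1 + h \<epsilon>) * ln_mono_eig (\<kappa>02 \<epsilon>) (\<alpha>0 \<epsilon>) (\<alpha>1 \<epsilon>)))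
       \<and> (\<exists>h. (h \<longlongrightarrow> 0) (at_right 0) \<and> (\<forall>\<^sub>F \<epsilon> in at_right 0.
            ln_mono_eig (\<kappa>01 \<epsilon>) (\<alpha>0 \<epsilon>) (\<alpha>1 \<epsilon>)
              = - (1 + h \<epsilon>) * ln_mono_eig (\<kappa>11 \<epsilon>) (\<alpha>1 \<epsilon>) (\<alpha>0 \<epsilon>)))
       \<and> (\<exists>h. (h \<longlongrightarrow> 0) (at_right 0) \<and> (\<forall>\<^sub>F \<epsilon> in at_right 0.
            ln_mono_eig (\<kappa>01 \<epsilon>) (\<alpha>0 \<epsilon>) (\<alpha>1 \<epsilon>)
              = (1 + h \<epsilon>) * ln_mono_eig (\<kappa>12 \<epsilon>) (\<alpha>1 \<epsilon>) (\<alpha>0 \<epsilon>)))"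

proof -
  define d where "d = (\<lambda>e. \<alpha>0 e - \<alpha>1 e)"
  let ?F = "at_right (0::real)"
  obtain c where c: "c > 0" and cg: "\<And>e. e > 0 \<Longrightarrow> \<bar>Im (\<alpha>0 e - \<alpha>1 e)\<bar> \<ge> c * cmod (\<alpha>0 e - \<alpha>1 e)"
    using generic by blast
  have pos: "eventually (\<lambda>e::real. e > 0) ?F" by (rule eventually_at_right_less)
  have a0: "(\<alpha>0 \<longlongrightarrow> 0) ?F"
  proof -
    have "(\<alpha>0 \<longlongrightarrow> \<alpha>0 0) (at 0 within {0..})"
      using cont\<alpha>(1) by (simp add: continuous_on_def)
    then have "(\<alpha>0 \<longlongrightarrow> \<alpha>0 0) (at 0 within {0<..})"
      by (rule tendsto_within_subset) auto
    then show ?thesis using \<alpha>zero by simp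
  qed
  have d0: "(d \<longlongrightarrow> 0) ?F"
  proof -
    have "d = (\<lambda>e. 2 * \<alpha>0 e)" unfolding d_def using sum\<alpha>
      by (metis add.commute add_diff_cancel_left' diff_minus_eq_add mult_2 neg_eq_iff_add_eq_0)
    moreover have "((\<lambda>e. 2 * \<alpha>0 e) \<longlongrightarrow> 2 * 0) ?F" by (intro tendsto_intros a0)
    ultimately show ?thesis by simp
  qed
  have gen: "eventually (\<lambda>e. Im (d e) \<ge> c * cmod (d e)) ?F"
    using pos
  proof eventually_elim
    case (elim e)
    have "\<alpha>1 e = - \<alpha>0 e" using sum\<alpha>[of e] by (simp add: eq_neg_iff_add_eq_0 add.commute)
    then have "Im (d e) > 0" unfolding d_def using Im\<alpha>0[OF elim] by simp
    then show ?case using cg[OF elim] unfolding d_def by simp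
  qed
  have nz: "eventually (\<lambda>e. d e \<noteq> 0) ?F" using pos by eventually_elim (use \<alpha>ne d_def in auto)
  have K: "\<And>k. (k \<longlongrightarrow> 1) ?F \<Longrightarrow> filterlim (\<lambda>x. Re (2 * of_real pi * \<i> * k x / d x)) at_top ?F"
    by (rule key[OF c d0 gen nz])
  have m02: "((\<lambda>e. - \<kappa>02 e) \<longlongrightarrow> 1) ?F" using tendsto_minus[OF num(2)] by simp
  have m12: "((\<lambda>e. - \<kappa>12 e) \<longlongrightarrow> 1) ?F" using tendsto_minus[OF num(4)] by simp
  have e1: "(\<lambda>\<epsilon>. mono_eig (\<kappa>01 \<epsilon>) (\<alpha>0 \<epsilon>) (\<alpha>1 \<epsilon>)) = (\<lambda>x. exp (2 * of_real pi * \<i> * \<kappa>01 x / d x))"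
    by (simp add: mono_eig_def char_number_def d_def)
  have e2: "(\<lambda>\<epsilon>. mono_eig (\<kappa>12 \<epsilon>) (\<alpha>1 \<epsilon>) (\<alpha>0 \<epsilon>)) = (\<lambda>x. exp (2 * of_real pi * \<i> * (- \<kappa>12 x) / d x))"
    by (rule ext) (simp add: mono_eig_def char_number_def d_def swapdiv[of _ "\<alpha>0 _" "\<alpha>1 _"])
  have e3: "(\<lambda>\<epsilon>. mono_eig (\<kappa>02 \<epsilon>) (\<alpha>0 \<epsilon>) (\<alpha>1 \<epsilon>)) = (\<lambda>x. exp (- (2 * of_real pi * \<i> * (- \<kappa>02 x) / d x)))"
    by (simp add: mono_eig_def char_number_def d_def)
  have e4: "(\<lambda>\<epsilon>. mono_eig (\<kappa>11 \<epsilon>) (\<alpha>1 \<epsilon>) (\<alpha>0 \<epsilon>)) = (\<lambda>x. exp (- (2 * of_real pi * \<i> * \<kappa>11 x / d x)))"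
    by (rule ext) (simp add: mono_eig_def char_number_def d_def swapdiv[of _ "\<alpha>0 _" "\<alpha>1 _"])
  have r1: "filterlim (\<lambda>\<epsilon>. mono_eig (\<kappa>01 \<epsilon>) (\<alpha>0 \<epsilon>) (\<alpha>1 \<epsilon>)) at_infinity ?F"
    unfolding e1 by (rule L_inf[OF K[OF num(1)]])
  have r2: "filterlim (\<lambda>\<epsilon>. mono_eig (\<kappa>12 \<epsilon>) (\<alpha>1 \<epsilon>) (\<alpha>0 \<epsilon>)) at_infinity ?F"
    unfolding e2 by (rule L_inf[OF K[OF m12]])
  have r3: "((\<lambda>\<epsilon>. mono_eig (\<kappa>02 \<epsilon>) (\<alpha>0 \<epsilon>) (\<alpha>1 \<epsilon>)) \<longlongrightarrow> 0) ?F"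
    unfolding e3 by (rule L_zero[OF K[OF m02]])
  have r4: "((\<lambda>\<epsilon>. mono_eig (\<kappa>11 \<epsilon>) (\<alpha>1 \<epsilon>) (\<alpha>0 \<epsilon>)) \<longlongrightarrow> 0) ?F"
    unfolding e4 by (rule L_zero[OF K[OF num(3)]])
  have nz02: "eventually (\<lambda>e. \<kappa>02 e \<noteq> 0) ?F" by (rule tendsto_imp_eventually_ne[OF num(2)]) simp
  have nz11: "eventually (\<lambda>e. \<kappa>11 e \<noteq> 0) ?F" by (rule tendsto_imp_eventually_ne[OF num(3)]) simp
  have nz12: "eventually (\<lambda>e. \<kappa>12 e \<noteq> 0) ?F" by (rule tendsto_imp_eventually_ne[OF num(4)]) simp
  have r5: "\<exists>h. (h \<longlongrightarrow> 0) ?F \<and> (\<forall>\<^sub>F \<epsilon> in ?F.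
            ln_mono_eig (\<kappa>01 \<epsilon>) (\<alpha>0 \<epsilon>) (\<alpha>1 \<epsilon>)
              = - (1 + h \<epsilon>) * ln_mono_eig (\<kappa>02 \<epsilon>) (\<alpha>0 \<epsilon>) (\<alpha>1 \<epsilon>))"
  proof (intro exI conjI)
    show "((\<lambda>x. - \<kappa>01 x / \<kappa>02 x - 1) \<longlongrightarrow> 0) ?F" by (rule ratio[OF num(1) num(2)])
    show "\<forall>\<^sub>F \<epsilon> in ?F. ln_mono_eig (\<kappa>01 \<epsilon>) (\<alpha>0 \<epsilon>) (\<alpha>1 \<epsilon>)
              = - (1 + (- \<kappa>01 \<epsilon> / \<kappa>02 \<epsilon> - 1)) * ln_mono_eig (\<kappa>02 \<epsilon>) (\<alpha>0 \<epsilon>) (\<alpha>1 \<epsilon>)"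
      using nz02 unfolding ln_mono_eig_def char_number_def by eventually_elim (rule l5)
  qed
  have r6: "\<exists>h. (h \<longlongrightarrow> 0) ?F \<and> (\<forall>\<^sub>F \<epsilon> in ?F.
            ln_mono_eig (\<kappa>01 \<epsilon>) (\<alpha>0 \<epsilon>) (\<alpha>1 \<epsilon>)
              = - (1 + h \<epsilon>) * ln_mono_eig (\<kappa>11 \<epsilon>) (\<alpha>1 \<epsilon>) (\<alpha>0 \<epsilon>))"
  proof (intro exI conjI)
    show "((\<lambda>x. \<kappa>01 x / \<kappa>11 x - 1) \<longlongrightarrow> 0) ?F" by (rule ratio2[OF num(1) num(3)])
    show "\<forall>\<^sub>F \<epsilon> in ?F. ln_mono_eig (\<kappa>01 \<epsilon>) (\<alpha>0 \<epsilon>) (\<alpha>1 \<epsilon>)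
              = - (1 + (\<kappa>01 \<epsilon> / \<kappa>11 \<epsilon> - 1)) * ln_mono_eig (\<kappa>11 \<epsilon>) (\<alpha>1 \<epsilon>) (\<alpha>0 \<epsilon>)"
      using nz11 unfolding ln_mono_eig_def char_number_def by eventually_elim (rule l6)
  qed
  have r7: "\<exists>h. (h \<longlongrightarrow> 0) ?F \<and> (\<forall>\<^sub>F \<epsilon> in ?F.
            ln_mono_eig (\<kappa>01 \<epsilon>) (\<alpha>0 \<epsilon>) (\<alpha>1 \<epsilon>)
              = (1 + h \<epsilon>) * ln_mono_eig (\<kappa>12 \<epsilon>) (\<alpha>1 \<epsilon>) (\<alpha>0 \<epsilon>))"
  proof (intro exI conjI)
    show "((\<lambda>x. - \<kappa>01 x / \<kappa>12 x - 1) \<longlongrightarrow> 0) ?F" by (rule ratio[OF num(1) num(4)])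
    show "\<forall>\<^sub>F \<epsilon> in ?F. ln_mono_eig (\<kappa>01 \<epsilon>) (\<alpha>0 \<epsilon>) (\<alpha>1 \<epsilon>)
              = (1 + (- \<kappa>01 \<epsilon> / \<kappa>12 \<epsilon> - 1)) * ln_mono_eig (\<kappa>12 \<epsilon>) (\<alpha>1 \<epsilon>) (\<alpha>0 \<epsilon>)"
      using nz12 unfolding ln_mono_eig_def char_number_def by eventually_elim (rule l7)
  qed
  show ?thesis using r1 r2 r3 r4 r5 r6 r7 by blast
qed

end
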